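(* Consider the weighted median search process described in the context. Let $I=\{\tau+1,\dots,\tau+k\}$ be an interval of $k$ consecutive steps such that some vertex $x$ is heavy with respect to the weights $\omega_{t-1}$ at the time of each query $t\in I$, and $x$ remains heavy with respect to $\omega_{\tau+k}$ after the last query in $I$. Then, for any sequence of answers, $$\omega_{\tau+k}(V\setminus\{x\})\le \frac{\omega_\tau(V)}{2^k}.$$
   Context: $G=(V,E)$ is a connected undirected unweighted graph, $0<p<\frac12$, $d(u,v)$ is the graph distance. Positive weights $\omega_t(v)$ are maintained, with $\omega(U)=\sum_{u\in U}\omega(u)$; a vertex $v$ is heavy (w.r.t. $\omega$) if $\omega(v)/\omega(V)\ge\frac12$. A median w.r.t. $\omega$ is a vertex $q$ minimizing $\sum_{u\in V}d(u,q)\omega(u)$. In step $t$ the process queries a median $q$ w.r.t. $\omega_{t-1}$, where a heavy vertex is chosen whenever one exists (a heavy vertex is always a median). The answer is either "yes" or a neighbor $u$ of $q$ (a "no-answer"). A vertex $v$ is compatible with the answer if: for a yes-answer, $v=q$; for a no-answer $u$ with $q$ not heavy, $u$ lies on a shortest $q$–$v$ path; for a no-answer with $q$ heavy, $v\neq q$. Bayesian update: $\omega_t(v)=(1-p)\omega_{t-1}(v)$ if $v$ is compatible and $\omega_t(v)=p\,\omega_{t-1}(v)$ otherwise. *)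

theory Defs
  imports Complex_Main
begin

definition graph :: "'a set \<Rightarrow> ('a \<Rightarrow> 'a \<Rightarrow> bool) \<Rightarrow> bool" where
  "graph V E \<longleftrightarrow> finite V \<and> V \<noteq> {} \<and>
     (\<forall>u v. E u v \<longrightarrow> u \<in> V \<and> v \<in> V \<and> E v u \<and> u \<noteq> v)"

fun walk :: "'a set \<Rightarrow> ('a \<Rightarrow> 'a \<Rightarrow> bool) \<Rightarrow> 'a list \<Rightarrow> bool" where
  "walk V E [] = False"
| "walk V E [v] = (v \<in> V)"
| "walk V E (u # v # xs) = (u \<in> V \<and> E u v \<and> walk V E (v # xs))"

definition connected_graph :: "'a set \<Rightarrow> ('a \<Rightarrow> 'a \<Rightarrow> bool) \<Rightarrow> bool" where
  "connected_graph V E \<longleftrightarrow> graph V E \<and>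
     (\<forall>u\<in>V. \<forall>v\<in>V. \<exists>xs. walk V E xs \<and> hd xs = u \<and> last xs = v)"

definition gdist :: "'a set \<Rightarrow> ('a \<Rightarrow> 'a \<Rightarrow> bool) \<Rightarrow> 'a \<Rightarrow> 'a \<Rightarrow> nat" where
  "gdist V E u v = (LEAST n. \<exists>xs. walk V E xs \<and> hd xs = u \<and> last xs = v \<and> length xs = n + 1)"

definition on_shortest_path :: "'a set \<Rightarrow> ('a \<Rightarrow> 'a \<Rightarrow> bool) \<Rightarrow> 'a \<Rightarrow> 'a \<Rightarrow> 'a \<Rightarrow> bool" where
  "on_shortest_path V E u q v \<longleftrightarrow>
     (\<exists>xs. walk V E xs \<and> hd xs = q \<and> last xs = v \<and> length xs = gdist V E q v + 1 \<and> u \<in> set xs)"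

definition heavy :: "'a set \<Rightarrow> ('a \<Rightarrow> real) \<Rightarrow> 'a \<Rightarrow> bool" where
  "heavy V w v \<longleftrightarrow> v \<in> V \<and> w v / sum w V \<ge> 1/2"

definition is_median :: "'a set \<Rightarrow> ('a \<Rightarrow> 'a \<Rightarrow> bool) \<Rightarrow> ('a \<Rightarrow> real) \<Rightarrow> 'a \<Rightarrow> bool" where
  "is_median V E w q \<longleftrightarrow> q \<in> V \<and>
     (\<forall>y\<in>V. (\<Sum>u\<in>V. real (gdist V E u q) * w u) \<le> (\<Sum>u\<in>V. real (gdist V E u y) * w u))"

text \<open>Answers: None = "yes", Some u = no-answer pointing to neighbor u.
  Compatibility of v with answer a to query q, given the current weights w.\<close>
definition compatible :: "'a set \<Rightarrow> ('a \<Rightarrow> 'a \<Rightarrow> bool) \<Rightarrow> ('a \<Rightarrow> real) \<Rightarrow> 'a \<Rightarrow> 'a option \<Rightarrow> 'a \<Rightarrow> bool" where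
  "compatible V E w q a v = (case a of
      None \<Rightarrow> v = q
    | Some u \<Rightarrow> (if heavy V w q then v \<noteq> q else on_shortest_path V E u q v))"

text \<open>The weighted median search process: omega t are the weights after step t,
  q t is the vertex queried in step t (t \<ge> 1), ans t the answer.\<close>
definition median_process ::
  "'a set \<Rightarrow> ('a \<Rightarrow> 'a \<Rightarrow> bool) \<Rightarrow> real \<Rightarrow> (nat \<Rightarrow> 'a \<Rightarrow> real) \<Rightarrow> (nat \<Rightarrow> 'a) \<Rightarrow> (nat \<Rightarrow> 'a option) \<Rightarrow> bool" where
  "median_process V E p \<omega> q ans \<longleftrightarrow>
     (\<forall>v\<in>V. \<omega> 0 v > 0) \<and>
     (\<forall>t\<ge>1.
        is_median V E (\<omega> (t-1)) (q t) \<and>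
        ((\<exists>v\<in>V. heavy V (\<omega> (t-1)) v) \<longrightarrow> heavy V (\<omega> (t-1)) (q t)) \<and>
        (case ans t of None \<Rightarrow> True | Some u \<Rightarrow> E (q t) u) \<and>
        (\<forall>v\<in>V. \<omega> t v = (if compatible V E (\<omega> (t-1)) (q t) (ans t) v then 1 - p else p) * \<omega> (t-1) v))"

end

theory Submission
  imports Defs
begin

lemma pos_weights:
  assumes mp: "median_process V E p \<omega> q ans" and p0: "0 < p" and p1: "p < 1/2"
  shows "\<forall>v\<in>V. \<omega> t v > 0"
proof (induction t)
  case 0
  then show ?case using mp unfolding median_process_def by blast
next
  case (Suc t)
  have upd: "\<forall>v\<in>V. \<omega> (Suc t) v = (if compatible V E (\<omega> t) (q (Suc t)) (ans (Suc t)) v then 1 - p else p) * \<omega> t v"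
    using mp unfolding median_process_def by (metis diff_Suc_1 le_add1 plus_1_eq_Suc)
  show ?case
  proof
    fix v assume v: "v \<in> V"
    have "(if compatible V E (\<omega> t) (q (Suc t)) (ans (Suc t)) v then 1 - p else p) > 0"
      using p0 p1 by auto
    then show "\<omega> (Suc t) v > 0" using upd v Suc by simp
  qed
qed

lemma step:
  assumes G: "connected_graph V E" and mp: "median_process V E p \<omega> q ans"
    and p0: "0 < p" and p1: "p < 1/2" and t1: "t \<ge> 1"
    and hx: "heavy V (\<omega> (t-1)) x"
  shows "\<exists>c. (c = p \<or> c = 1 - p) \<and> \<omega> t x = c * \<omega> (t-1) x \<and>
           (\<forall>v\<in>V-{x}. \<omega> t v = (1 - c) * \<omega> (t-1) v)"
proof -
  let ?w = "\<omega> (t-1)"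
  let ?C = "compatible V E ?w (q t) (ans t)"
  have fin: "finite V" using G unfolding connected_graph_def graph_def by (elim conjE)
  have xV: "x \<in> V" using hx unfolding heavy_def by blast
  have A: "is_median V E ?w (q t) \<and>
        ((\<exists>v\<in>V. heavy V ?w v) \<longrightarrow> heavy V ?w (q t)) \<and>
        (case ans t of None \<Rightarrow> True | Some u \<Rightarrow> E (q t) u) \<and>
        (\<forall>v\<in>V. \<omega> t v = (if ?C v then 1 - p else p) * ?w v)"
    using mp[unfolded median_process_def, THEN conjunct2, rule_format, OF t1] .
  have hq: "heavy V ?w (q t)" using A[THEN conjunct2, THEN conjunct1] xV hx by blast
  have upd: "\<And>v. v \<in> V \<Longrightarrow> \<omega> t v = (if ?C v then 1 - p else p) * ?w v"
    using A[THEN conjunct2, THEN conjunct2, THEN conjunct2] by blast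
  have pos: "\<forall>v\<in>V. ?w v > 0" using pos_weights[OF mp p0 p1] by blast
  have cN: "ans t = None \<Longrightarrow> ?C v = (v = q t)" for v
    unfolding compatible_def by simp
  have cS: "ans t = Some u \<Longrightarrow> ?C v = (v \<noteq> q t)" for v u
    using hq unfolding compatible_def by simp
  define y where "y = q t"
  have Vx: "V - {x} = {y}" if False: "y \<noteq> x"
  proof -
    have yV: "y \<in> V" using hq unfolding heavy_def y_def by blast
    have Wpos: "sum ?w V > 0" using fin pos xV by (intro sum_pos) auto
    have hx2: "?w x \<ge> sum ?w V / 2" using hx Wpos unfolding heavy_def
      by (simp add: divide_simps)
    have hy2: "?w y \<ge> sum ?w V / 2" using hq Wpos unfolding heavy_def y_def
      by (simp add: divide_simps)
    have xy: "x \<noteq> y" using False by simp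
    have split: "sum ?w V = ?w x + ?w y + sum ?w (V - {x} - {y})"
    proof -
      have "sum ?w V = ?w x + sum ?w (V - {x})" using fin xV by (simp add: sum.remove)
      also have "sum ?w (V - {x}) = ?w y + sum ?w (V - {x} - {y})"
        using fin yV xy by (simp add: sum.remove)
      finally show ?thesis by (simp add: add.assoc)
    qed
    have rest: "V - {x} - {y} = {}"
    proof (rule ccontr)
      assume ne: "V - {x} - {y} \<noteq> {}"
      have "sum ?w (V - {x} - {y}) > 0" using ne fin pos by (intro sum_pos) auto
      then show False using split hx2 hy2 by linarith
    qed
    show ?thesis using rest yV xy by blast
  qed
  have X1: ?thesis if H: "\<forall>v\<in>V. ?C v = (v = x)"
  proof (intro exI[of _ "1-p"] conjI ballI)
    show "1-p = p \<or> 1-p = 1-p" by simp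
    have "?C x" using H xV by blast
    then show "\<omega> t x = (1-p) * ?w x" using upd[OF xV] by simp
    fix v assume v: "v \<in> V - {x}"
    then have "\<not> ?C v" using H by blast
    then show "\<omega> t v = (1 - (1-p)) * ?w v" using upd[of v] v by simp
  qed
  have X2: ?thesis if H: "\<forall>v\<in>V. ?C v = (v \<noteq> x)"
  proof (intro exI[of _ "p"] conjI ballI)
    show "p = p \<or> p = 1-p" by simp
    have "\<not> ?C x" using H xV by blast
    then show "\<omega> t x = p * ?w x" using upd[OF xV] by simp
    fix v assume v: "v \<in> V - {x}"
    then have "?C v" using H by blast
    then show "\<omega> t v = (1 - p) * ?w v" using upd[of v] v by simp
  qed
  show ?thesis
  proof (cases "y = x")
    case True
    show ?thesis
    proof (cases "ans t")
      case None
      show ?thesis using cN[OF None] True y_def by (intro X1) simp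
    next
      case (Some u)
      show ?thesis using cS[OF Some] True y_def by (intro X2) simp
    qed
  next
    case False
    have Vx': "V - {x} = {y}" using Vx[OF False] .
    have yx: "\<forall>v\<in>V. (v = y) = (v \<noteq> x)" using Vx' False by blast
    show ?thesis
    proof (cases "ans t")
      case None
      show ?thesis using cN[OF None] yx y_def by (intro X2) simp
    next
      case (Some u)
      show ?thesis using cS[OF Some] yx y_def by (intro X1) auto
    qed
  qed
qed

lemma a1: "(p::real) * (1-p) \<le> 1/4"
proof -
  have "p*(1-p) = 1/4 - (p-1/2)^2" by (simp add: power2_eq_square algebra_simps)
  then show ?thesis using zero_le_power2[of "p-1/2"] by linarith
qed
lemma amgm: "(a::real) * b \<le> (a+b)^2/4"
proof -
  have "(a+b)^2/4 - a*b = (a-b)^2/4" by (simp add: power2_eq_square algebra_simps)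
  then show ?thesis using zero_le_power2[of "a-b"] by linarith
qed
lemma pw: "((W::real) / 2^(k+1))^2 = (1/4)^k * (W^2/4)"
proof -
  have "((2::real)^(k+1))^2 = 4^k*4" by (simp add: power2_eq_square power_mult_distrib[symmetric])
  then show ?thesis by (simp add: power_divide power_one_over)
qed
theorem lemma4:
  fixes V :: "'a set" and E :: "'a \<Rightarrow> 'a \<Rightarrow> bool" and p :: real
    and \<omega> :: "nat \<Rightarrow> 'a \<Rightarrow> real" and q :: "nat \<Rightarrow> 'a" and ans :: "nat \<Rightarrow> 'a option"
    and \<tau> k :: nat and x :: 'a
  assumes "connected_graph V E"
    and "0 < p" and "p < 1/2"
    and "median_process V E p \<omega> q ans"
    and "\<forall>t\<in>{\<tau>+1..\<tau>+k}. heavy V (\<omega> (t-1)) x"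
    and "heavy V (\<omega> (\<tau>+k)) x"
  shows "sum (\<omega> (\<tau>+k)) (V - {x}) \<le> sum (\<omega> \<tau>) V / 2^k"
proof -
  define S where "S t = sum (\<omega> t) (V - {x})" for t
  define P where "P t = \<omega> t x * S t" for t
  have fin: "finite V" using assms(1) unfolding connected_graph_def graph_def by (elim conjE)
  have xV: "x \<in> V" using assms(6) unfolding heavy_def by (elim conjE)
  have pos: "\<And>t. \<forall>v\<in>V. \<omega> t v > 0" using pos_weights[OF assms(4) assms(2) assms(3)] by blast
  have Snn: "S t \<ge> 0" for t unfolding S_def using pos by (intro sum_nonneg) (auto intro: less_imp_le)
  have split: "sum (\<omega> t) V = \<omega> t x + S t" for t
    unfolding S_def using fin xV by (simp add: sum.remove)
  have Pstep: "P (Suc t) = p * (1 - p) * P t" if hh: "heavy V (\<omega> t) x" for t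
  proof -
    have t1: "Suc t \<ge> 1" by simp
    have hh': "heavy V (\<omega> (Suc t - 1)) x" using hh by simp
    obtain c where c: "c = p \<or> c = 1 - p" "\<omega> (Suc t) x = c * \<omega> t x"
      "\<forall>v\<in>V-{x}. \<omega> (Suc t) v = (1 - c) * \<omega> t v"
      using step[OF assms(1) assms(4) assms(2) assms(3) t1 hh'] by auto
    have "S (Suc t) = (1 - c) * S t" unfolding S_def using c(3)
      by (simp add: sum_distrib_left)
    then have "P (Suc t) = c * (1 - c) * P t" unfolding P_def using c(2) by simp
    moreover have "c * (1 - c) = p * (1 - p)"
    proof (cases "c = p")
      case False
      then have "c = 1 - p" using c(1) by simp
      then show ?thesis by (simp add: mult.commute)
    qed simp
    ultimately show ?thesis by simp
  qed
  have Pind: "j \<le> k \<Longrightarrow> P (\<tau> + j) = (p * (1 - p)) ^ j * P \<tau>" for j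
  proof (induction j)
    case 0 then show ?case by simp
  next
    case (Suc j)
    have "\<tau> + Suc j \<in> {\<tau>+1..\<tau>+k}" using Suc.prems by simp
    then have "heavy V (\<omega> (\<tau> + Suc j - 1)) x" using assms(5) by blast
    then have "heavy V (\<omega> (\<tau> + j)) x" by simp
    then show ?case using Pstep[of "\<tau> + j"] Suc by simp
  qed
  define W where "W = sum (\<omega> \<tau>) V"
  define a where "a = p * (1 - p)"
  have a0: "0 \<le> a" unfolding a_def using assms(2,3) by simp
  have a1: "a \<le> 1/4" unfolding a_def by (rule a1)
  have Ptau: "P \<tau> \<le> W^2 / 4" unfolding P_def W_def split[of \<tau>] by (rule amgm)
  have Ptau0: "P \<tau> \<ge> 0" unfolding P_def using pos xV Snn by (simp add: less_imp_le)
  have "P (\<tau> + k) = a ^ k * P \<tau>" using Pind[of k] a_def by simp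
  also have "\<dots> \<le> (1/4) ^ k * (W^2 / 4)"
    using a0 a1 Ptau Ptau0 by (intro mult_mono power_mono) auto
  finally have Pk: "P (\<tau> + k) \<le> (1/4) ^ k * (W^2 / 4)" .
  have Wpos: "sum (\<omega> (\<tau>+k)) V > 0" using fin pos xV by (intro sum_pos) auto
  have "\<omega> (\<tau>+k) x \<ge> sum (\<omega> (\<tau>+k)) V / 2" using assms(6) Wpos unfolding heavy_def
    by (simp add: divide_simps)
  then have SleX: "S (\<tau>+k) \<le> \<omega> (\<tau>+k) x" using split[of "\<tau>+k"] by linarith
  have W0: "W \<ge> 0" unfolding W_def using pos by (intro sum_nonneg) (auto intro: less_imp_le)
  have "S (\<tau>+k)^2 \<le> P (\<tau>+k)" unfolding P_def power2_eq_square
    using SleX Snn by (simp add: mult_right_mono)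
  also have "\<dots> \<le> (W / 2^(k+1))^2" using Pk pw[of W k] by simp
  finally have S2: "S (\<tau>+k)^2 \<le> (W / 2^(k+1))^2" .
  have "S (\<tau>+k) \<le> W / 2^(k+1)"
    by (rule power2_le_imp_le[OF S2]) (simp add: W0)
  also have "\<dots> \<le> W / 2^k"
    using W0 by (intro divide_left_mono) auto
  finally show ?thesis unfolding S_def W_def .
qed

end
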